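(* Let $G_0$ be a fixed $n\times l$ binary matrix, $G_1$ a fixed $n\times k$ binary matrix, $\mathbf m\in\{0,1\}^k$ fixed, $t_0=\lfloor (d_0-1)/2\rfloor$, and $1\le u\le n$. Then $$P(E=0\mid U=u)\;\begin{cases}=0, & u<d_0,\\[2pt] =\dfrac12\cdot\dfrac{\sum_{w=d_0}^{u}B_{0,w}\binom{n-w}{u-w}}{\binom nu}, & d_0\le u\le d_0+t_0,\\[6pt] \le \min\left\{\dfrac{\sum_{w=d_0}^{u}B_{0,w}\binom{n-w}{u-w}}{\binom nu},1\right\}, & u>d_0+t_0.\end{cases}$$
   Context: All arithmetic is over $\mathrm{GF}(2)$. $\mathcal C_0^{\perp}=\{\mathbf x\in\{0,1\}^n: G_0^T\mathbf x=\mathbf 0\}$; $B_{0,w}$ is the number of vectors of Hamming weight $w$ in $\mathcal C_0^\perp$, and $d_0$ is the minimum Hamming weight of a nonzero vector of $\mathcal C_0^\perp$. Defect model: each of the $n$ memory cells is independently defective with probability $\beta\in(0,1)$; a defective cell is stuck at $0$ or at $1$, each with probability $1/2$, independently. Let $\mathcal U$ be the set of defect positions, $U=|\mathcal U|$, $\mathbf s^{\mathcal U}$ the vector of stuck-at values; conditionally on $U=u$, $\mathcal U$ is a uniform random $u$-subset and $\mathbf s^{\mathcal U}$ is uniform on $\{0,1\}^u$. For a matrix $M$ (resp. vector $\mathbf v$) with rows indexed by $\{1,\dots,n\}$, $M^{\mathcal U}$ (resp. $\mathbf v^{\mathcal U}$) denotes the rows indexed by $\mathcal U$. Encoding: with $\mathbf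 b^{\mathcal U}=(G_1\mathbf m)^{\mathcal U}+\mathbf s^{\mathcal U}$, look for $\mathbf d\in\{0,1\}^l$ with $G_0^{\mathcal U}\mathbf d=\mathbf b^{\mathcal U}$; $E=1$ if such $\mathbf d$ exists and $E=0$ (encoding failure) otherwise. *)

theory Defs
  imports "HOL-Probability.Probability" "HOL-Library.Z2"
begin

definition bvecs :: "nat \<Rightarrow> (nat \<Rightarrow> bit) set" where
  "bvecs n = {..<n} \<rightarrow>\<^sub>E (UNIV :: bit set)"

definition dual_code :: "nat \<Rightarrow> nat \<Rightarrow> (nat \<Rightarrow> nat \<Rightarrow> bit) \<Rightarrow> (nat \<Rightarrow> bit) set" where
  "dual_code n l G0 = {x \<in> bvecs n. \<forall>j<l. (\<Sum>i<n. G0 i j * x i) = 0}"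

definition hweight :: "nat \<Rightarrow> (nat \<Rightarrow> bit) \<Rightarrow> nat" where
  "hweight n x = card {i. i < n \<and> x i \<noteq> 0}"

definition Bw :: "nat \<Rightarrow> nat \<Rightarrow> (nat \<Rightarrow> nat \<Rightarrow> bit) \<Rightarrow> nat \<Rightarrow> nat" where
  "Bw n l G0 w = card {x \<in> dual_code n l G0. hweight n x = w}"

definition dmin :: "nat \<Rightarrow> nat \<Rightarrow> (nat \<Rightarrow> nat \<Rightarrow> bit) \<Rightarrow> nat" where
  "dmin n l G0 = Min {hweight n x | x. x \<in> dual_code n l G0 \<and> (\<exists>i<n. x i \<noteq> 0)}"

text \<open>Conditional sample space given U = u: a defect set S (a u-subset of {0..<n})
together with stuck-at values s on S; uniformly distributed.\<close>
definition defect_space :: "nat \<Rightarrow> nat \<Rightarrow> (nat set \<times> (nat \<Rightarrow> bit)) set" where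
  "defect_space n u = {(S, s). S \<subseteq> {..<n} \<and> card S = u \<and> s \<in> S \<rightarrow>\<^sub>E (UNIV :: bit set)}"

definition encodable ::
  "nat \<Rightarrow> nat \<Rightarrow> (nat \<Rightarrow> nat \<Rightarrow> bit) \<Rightarrow> (nat \<Rightarrow> nat \<Rightarrow> bit) \<Rightarrow> (nat \<Rightarrow> bit)
     \<Rightarrow> nat set \<Rightarrow> (nat \<Rightarrow> bit) \<Rightarrow> bool" where
  "encodable l k G0 G1 m S s =
     (\<exists>d \<in> bvecs l. \<forall>i\<in>S. (\<Sum>j<l. G0 i j * d j) = (\<Sum>j<k. G1 i j * m j) + s i)"

definition fail_prob ::
  "nat \<Rightarrow> nat \<Rightarrow> nat \<Rightarrow> (nat \<Rightarrow> nat \<Rightarrow> bit) \<Rightarrow> (nat \<Rightarrow> nat \<Rightarrow> bit) \<Rightarrow> (nat \<Rightarrow> bit)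
     \<Rightarrow> nat \<Rightarrow> real" where
  "fail_prob n l k G0 G1 m u =
     measure_pmf.prob (pmf_of_set (defect_space n u))
       {(S, s). \<not> encodable l k G0 G1 m S s}"

end

theory Submission imports Defs begin


definition vadd :: "nat set \<Rightarrow> (nat\<Rightarrow>bit) \<Rightarrow> (nat\<Rightarrow>bit) \<Rightarrow> nat\<Rightarrow>bit" where
  "vadd S a b = restrict (\<lambda>i. a i + b i) S"
definition dot :: "nat set \<Rightarrow> (nat\<Rightarrow>bit) \<Rightarrow> (nat\<Rightarrow>bit) \<Rightarrow> bit" where
  "dot S y v = (\<Sum>i\<in>S. y i * v i)"

lemma bit_add_self[simp]: "(x::bit) + x = 0"
  by (cases x) simp_all

lemma bit_cases2: "(x::bit) = 0 \<or> x = 1" by (cases x) simp_all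

lemma UNIV_bit: "(UNIV::bit set) = {0, 1}" using bit_cases2 by auto

lemma card_bit: "card (UNIV::bit set) = 2"
  unfolding UNIV_bit by simp

lemma finite_bit[simp]: "finite (UNIV::bit set)"
  unfolding UNIV_bit by simp

lemma half_card:
  assumes "finite A" "\<And>a. a\<in>A \<Longrightarrow> g a \<in> A" "\<And>a. a\<in>A \<Longrightarrow> g (g a) = a"
    "\<And>a. a\<in>A \<Longrightarrow> f (g a) = f a + (1::bit)"
  shows "card A = 2 * card {a\<in>A. f a = 0}"
proof -
  have A: "A = {a\<in>A. f a = 0} \<union> {a\<in>A. f a = 1}" using bit_cases2 by auto
  have "bij_betw g {a\<in>A. f a = 0} {a\<in>A. f a = 1}"
  proof (rule bij_betw_byWitness[where f'=g])
    show "g ` {a \<in> A. f a = 0} \<subseteq> {a \<in> A. f a = 1}" using assms by auto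
    show "g ` {a \<in> A. f a = 1} \<subseteq> {a \<in> A. f a = 0}" using assms by auto
  qed (use assms in auto)
  then have "card {a\<in>A. f a = 0} = card {a\<in>A. f a = 1}" by (rule bij_betw_same_card)
  moreover have "card A = card {a\<in>A. f a = 0} + card {a\<in>A. f a = 1}"
    by (subst A) (rule card_Un_disjoint, use assms(1) in auto)
  ultimately show ?thesis by simp
qed

lemma vadd_inv:
  assumes "a \<in> S \<rightarrow>\<^sub>E UNIV" shows "vadd S v (vadd S v a) = a"
  using assms unfolding vadd_def by (auto simp: fun_eq_iff add.assoc[symmetric] PiE_def extensional_def)

lemma vadd_in: "vadd S a b \<in> S \<rightarrow>\<^sub>E UNIV" unfolding vadd_def by auto

lemma dot_vadd_right: "dot S y (vadd S a b) = dot S y a + dot S y b"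
proof -
  have "(\<Sum>i\<in>S. y i * restrict (\<lambda>i. a i + b i) S i) = (\<Sum>i\<in>S. y i * a i + y i * b i)"
    by (rule sum.cong) (simp_all add: distrib_left del: add_bit_eq_xor mult_bit_eq_and)
  then show ?thesis unfolding dot_def vadd_def by (simp only: sum.distrib)
qed

lemma dot_vadd_left: "dot S (vadd S a b) y = dot S a y + dot S b y"
proof -
  have "(\<Sum>i\<in>S. restrict (\<lambda>i. a i + b i) S i * y i) = (\<Sum>i\<in>S. a i * y i + b i * y i)"
    by (rule sum.cong) (simp_all add: distrib_right del: add_bit_eq_xor mult_bit_eq_and)
  then show ?thesis unfolding dot_def vadd_def by (simp only: sum.distrib)
qed

lemma perp_card:
  assumes fin: "finite S" and V: "V \<subseteq> S \<rightarrow>\<^sub>E UNIV"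
    and cl: "\<And>a b. a\<in>V \<Longrightarrow> b\<in>V \<Longrightarrow> vadd S a b \<in> V" and z: "restrict (\<lambda>_. 0) S \<in> V"
  shows "card V * card {y \<in> S \<rightarrow>\<^sub>E UNIV. \<forall>v\<in>V. dot S y v = 0} = 2 ^ card S"
proof -
  define Y where "Y = (S \<rightarrow>\<^sub>E (UNIV::bit set))"
  define W where "W = {y \<in> Y. \<forall>v\<in>V. dot S y v = 0}"
  define zz where "zz = restrict (\<lambda>_. 0::bit) S"
  have finY: "finite Y" unfolding Y_def using fin by (simp add: finite_PiE)
  have cY: "card Y = 2 ^ card S" unfolding Y_def using fin by (simp add: card_PiE card_bit)
  have finV: "finite V" using finY V Y_def finite_subset by blast
  have WY: "W \<subseteq> Y" unfolding W_def by auto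
  have s1: "(\<Sum>y\<in>Y. card {v\<in>V. dot S y v = 0}) = (\<Sum>v\<in>V. card {y\<in>Y. dot S y v = 0})"
    using sum.swap_restrict[OF finY finV, of "\<lambda>_ _. 1::nat" "\<lambda>y v. dot S y v = 0"] by simp
  have cy: "2 * card {v\<in>V. dot S y v = 0} = card V + (if y \<in> W then card V else 0)" if y: "y \<in> Y" for y
  proof (cases "y \<in> W")
    case True
    then have "{v\<in>V. dot S y v = 0} = V" unfolding W_def by auto
    then show ?thesis using True by simp
  next
    case False
    then obtain v0 where v0: "v0 \<in> V" "dot S y v0 = 1" using y bit_cases2 unfolding W_def by blast
    have "card V = 2 * card {v\<in>V. dot S y v = 0}"
    proof (rule half_card[where g="vadd S v0"])
      show "finite V" by (rule finV)
    next
      fix a assume "a \<in> V"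
      then show "vadd S v0 a \<in> V" "vadd S v0 (vadd S v0 a) = a" "dot S y (vadd S v0 a) = dot S y a + 1"
        using cl v0 V vadd_inv[of a S v0] by (auto simp: dot_vadd_right add.commute)
    qed
    then show ?thesis using False by simp
  qed
  have cv: "2 * card {y\<in>Y. dot S y v = 0} = card Y + (if v = zz then card Y else 0)" if v: "v \<in> V" for v
  proof (cases "v = zz")
    case True
    then have "{y\<in>Y. dot S y v = 0} = Y" unfolding zz_def dot_def by auto
    then show ?thesis using True by simp
  next
    case False
    have vY: "v \<in> Y" using v V Y_def by auto
    have "\<exists>i\<in>S. v i \<noteq> 0"
    proof (rule ccontr)
      assume "\<not> ?thesis"
      then have "v = zz" using vY unfolding zz_def Y_def by (auto simp: fun_eq_iff PiE_def extensional_def)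
      then show False using False by simp
    qed
    then obtain i where i: "i \<in> S" "v i = 1" by auto
    define e where "e = restrict (\<lambda>j. if j = i then 1 else 0::bit) S"
    have de: "dot S e v = 1"
    proof -
      have "dot S e v = (\<Sum>j\<in>S. if j = i then v j else 0)" unfolding dot_def e_def
        by (rule sum.cong) auto
      also have "\<dots> = 1" using fin i by (simp add: sum.delta)
      finally show ?thesis .
    qed
    have "card Y = 2 * card {y\<in>Y. dot S y v = 0}"
    proof (rule half_card[where g="vadd S e"])
      show "finite Y" by (rule finY)
    next
      fix a assume "a \<in> Y"
      then show "vadd S e a \<in> Y" "vadd S e (vadd S e a) = a" "dot S (vadd S e a) v = dot S a v + 1"
        using vadd_inv[of a S e] de vadd_in unfolding Y_def by (auto simp: dot_vadd_left add.commute)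
    qed
    then show ?thesis using False by simp
  qed
  have "2 * (\<Sum>y\<in>Y. card {v\<in>V. dot S y v = 0}) = (\<Sum>y\<in>Y. card V + (if y \<in> W then card V else 0))"
    by (simp add: sum_distrib_left cy)
  also have "\<dots> = card Y * card V + card W * card V"
    using WY finY by (simp add: sum.distrib sum.If_cases Int_absorb1)
  finally have e1: "2 * (\<Sum>y\<in>Y. card {v\<in>V. dot S y v = 0}) = card Y * card V + card W * card V" .
  have "2 * (\<Sum>v\<in>V. card {y\<in>Y. dot S y v = 0}) = (\<Sum>v\<in>V. card Y + (if v = zz then card Y else 0))"
    by (simp add: sum_distrib_left cv)
  also have "\<dots> = card V * card Y + card Y"
    using finV z by (simp add: sum.distrib zz_def)
  finally have e2: "2 * (\<Sum>v\<in>V. card {y\<in>Y. dot S y v = 0}) = card V * card Y + card Y" .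
  from e1 e2 s1 have "card W * card V = card Y" by (simp add: mult.commute)
  then show ?thesis using cY unfolding W_def Y_def by (simp add: mult.commute)
qed




definition rv :: "(nat \<Rightarrow> nat \<Rightarrow> bit) \<Rightarrow> nat \<Rightarrow> (nat \<Rightarrow> bit) \<Rightarrow> nat \<Rightarrow> bit" where
  "rv G0 l d = (\<lambda>i. \<Sum>j<l. G0 i j * d j)"
definition Vs :: "nat \<Rightarrow> (nat \<Rightarrow> nat \<Rightarrow> bit) \<Rightarrow> nat set \<Rightarrow> (nat \<Rightarrow> bit) set" where
  "Vs l G0 S = (\<lambda>d. restrict (rv G0 l d) S) ` bvecs l"
definition DS :: "nat \<Rightarrow> nat \<Rightarrow> (nat \<Rightarrow> nat \<Rightarrow> bit) \<Rightarrow> nat set \<Rightarrow> (nat \<Rightarrow> bit) set" where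
  "DS n l G0 S = {x \<in> dual_code n l G0. \<forall>i<n. i \<notin> S \<longrightarrow> x i = 0}"

lemma restrict_eq_iff: "restrict f A = restrict g A \<longleftrightarrow> (\<forall>x\<in>A. f x = g x)"
  by (auto simp: fun_eq_iff)

lemma Vs_sub: "Vs l G0 S \<subseteq> S \<rightarrow>\<^sub>E UNIV" unfolding Vs_def by auto

lemma Vs_zero: "restrict (\<lambda>_. 0) S \<in> Vs l G0 S"
proof -
  have h1: "restrict (\<lambda>_. 0) {..<l} \<in> bvecs l" unfolding bvecs_def by auto
  have h2: "restrict (rv G0 l (restrict (\<lambda>_. 0) {..<l})) S = restrict (\<lambda>_. 0) S"
    unfolding rv_def by (auto simp: fun_eq_iff)
  show ?thesis unfolding Vs_def by (rule image_eqI[where f="\<lambda>d. restrict (rv G0 l d) S", OF h2[symmetric] h1])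
qed

lemma Vs_add: assumes "a \<in> Vs l G0 S" "b \<in> Vs l G0 S" shows "vadd S a b \<in> Vs l G0 S"
proof -
  obtain d where d: "d \<in> bvecs l" "a = restrict (rv G0 l d) S" using assms unfolding Vs_def by auto
  obtain d' where d': "d' \<in> bvecs l" "b = restrict (rv G0 l d') S" using assms unfolding Vs_def by auto
  define e where "e = restrict (\<lambda>j. d j + d' j) {..<l}"
  have h1: "e \<in> bvecs l" unfolding e_def bvecs_def by auto
  have h2: "vadd S a b = restrict (rv G0 l e) S"
    unfolding vadd_def d d' restrict_eq_iff
  proof
    fix i assume "i \<in> S"
    have "(\<Sum>j<l. G0 i j * e j) = (\<Sum>j<l. G0 i j * d j + G0 i j * d' j)"
      by (rule sum.cong) (simp_all add: e_def distrib_left del: add_bit_eq_xor mult_bit_eq_and)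
    then show "restrict (rv G0 l d) S i + restrict (rv G0 l d') S i = rv G0 l e i"
      using \<open>i \<in> S\<close> unfolding rv_def by (simp only: sum.distrib restrict_apply')
  qed
  show ?thesis unfolding Vs_def by (rule image_eqI[where f="\<lambda>d. restrict (rv G0 l d) S", OF h2 h1])
qed

lemma dot_rv: "dot S y (restrict (rv G0 l d) S) = (\<Sum>j<l. d j * (\<Sum>i\<in>S. G0 i j * y i))"
proof -
  have "dot S y (restrict (rv G0 l d) S) = (\<Sum>i\<in>S. \<Sum>j<l. y i * (G0 i j * d j))"
    unfolding dot_def rv_def by (rule sum.cong) (simp_all add: sum_distrib_left del: add_bit_eq_xor mult_bit_eq_and)
  also have "\<dots> = (\<Sum>j<l. \<Sum>i\<in>S. y i * (G0 i j * d j))" by (rule sum.swap)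
  also have "\<dots> = (\<Sum>j<l. d j * (\<Sum>i\<in>S. G0 i j * y i))"
    by (rule sum.cong) (simp_all add: sum_distrib_left ac_simps del: add_bit_eq_xor mult_bit_eq_and)
  finally show ?thesis .
qed

lemma perp_iff: "(\<forall>v\<in>Vs l G0 S. dot S y v = 0) \<longleftrightarrow> (\<forall>j<l. (\<Sum>i\<in>S. G0 i j * y i) = 0)"
proof
  assume "\<forall>j<l. (\<Sum>i\<in>S. G0 i j * y i) = 0"
  then show "\<forall>v\<in>Vs l G0 S. dot S y v = 0" unfolding Vs_def by (auto simp: dot_rv)
next
  assume h: "\<forall>v\<in>Vs l G0 S. dot S y v = 0"
  show "\<forall>j<l. (\<Sum>i\<in>S. G0 i j * y i) = 0"
  proof (intro allI impI)
    fix j assume j: "j < l"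
    define d where "d = restrict (\<lambda>j'. if j' = j then 1 else 0::bit) {..<l}"
    have "d \<in> bvecs l" unfolding d_def bvecs_def by auto
    then have "0 = (\<Sum>j'<l. d j' * (\<Sum>i\<in>S. G0 i j' * y i))" using h unfolding Vs_def by (auto simp: dot_rv)
    also have "\<dots> = (\<Sum>j'<l. if j' = j then (\<Sum>i\<in>S. G0 i j' * y i) else 0)"
      by (rule sum.cong) (auto simp: d_def simp del: add_bit_eq_xor mult_bit_eq_and)
    also have "\<dots> = (\<Sum>i\<in>S. G0 i j * y i)" using j by (simp add: sum.delta del: add_bit_eq_xor mult_bit_eq_and)
    finally show "(\<Sum>i\<in>S. G0 i j * y i) = 0" by simp
  qed
qed

lemma sum_supp:
  fixes G0 :: "nat \<Rightarrow> nat \<Rightarrow> bit" and x :: "nat \<Rightarrow> bit"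
  assumes "S \<subseteq> {..<n}" "\<forall>i<n. i \<notin> S \<longrightarrow> x i = 0"
  shows "(\<Sum>i<n. G0 i j * x i) = (\<Sum>i\<in>S. G0 i j * x i)"
  by (rule sum.mono_neutral_right) (use assms in auto)

lemma DS_card:
  assumes S: "S \<subseteq> {..<n}"
  shows "card (Vs l G0 S) * card (DS n l G0 S) = 2 ^ card S"
proof -
  define W where "W = {y \<in> S \<rightarrow>\<^sub>E UNIV. \<forall>v\<in>Vs l G0 S. dot S y v = 0}"
  have fin: "finite S" using S finite_subset by blast
  have W: "card (Vs l G0 S) * card W = 2 ^ card S"
    unfolding W_def by (rule perp_card[OF fin Vs_sub Vs_add Vs_zero])
  define ext where "ext y = restrict (\<lambda>i. if i \<in> S then y i else 0) {..<n}" for y :: "nat \<Rightarrow> bit"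
  have "bij_betw (\<lambda>x. restrict x S) (DS n l G0 S) W"
  proof (rule bij_betw_byWitness[where f'=ext])
    show "\<forall>a\<in>DS n l G0 S. ext (restrict a S) = a"
      using S unfolding DS_def dual_code_def bvecs_def ext_def
      by (auto simp: fun_eq_iff PiE_def extensional_def)
    show "\<forall>a'\<in>W. restrict (ext a') S = a'"
      using S unfolding W_def ext_def by (auto simp: fun_eq_iff PiE_def extensional_def)
    show "(\<lambda>x. restrict x S) ` DS n l G0 S \<subseteq> W"
    proof
      fix y assume "y \<in> (\<lambda>x. restrict x S) ` DS n l G0 S"
      then obtain x where x: "x \<in> DS n l G0 S" "y = restrict x S" by auto
      have "(\<Sum>i\<in>S. G0 i j * y i) = 0" if "j < l" for j
      proof -
        have "(\<Sum>i\<in>S. G0 i j * y i) = (\<Sum>i\<in>S. G0 i j * x i)" using x(2) by simp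
        also have "\<dots> = (\<Sum>i<n. G0 i j * x i)" using sum_supp[OF S, of x G0 j] x(1) unfolding DS_def by simp
        also have "\<dots> = 0" using x(1) that unfolding DS_def dual_code_def by auto
        finally show ?thesis .
      qed
      then show "y \<in> W" unfolding W_def perp_iff using x(2) by auto
    qed
    show "ext ` W \<subseteq> DS n l G0 S"
    proof
      fix x assume "x \<in> ext ` W"
      then obtain y where y: "y \<in> W" "x = ext y" by auto
      have supp: "\<forall>i<n. i \<notin> S \<longrightarrow> x i = 0" using y(2) unfolding ext_def by auto
      have "(\<Sum>i<n. G0 i j * x i) = 0" if "j < l" for j
      proof -
        have "(\<Sum>i<n. G0 i j * x i) = (\<Sum>i\<in>S. G0 i j * x i)" by (rule sum_supp[OF S supp])
        also have "\<dots> = (\<Sum>i\<in>S. G0 i j * y i)" using y(2) S unfolding ext_def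
          by (intro sum.cong) auto
        also have "\<dots> = 0" using y(1) that unfolding W_def perp_iff by auto
        finally show ?thesis .
      qed
      moreover have "x \<in> bvecs n" using y(2) unfolding ext_def bvecs_def by auto
      ultimately show "x \<in> DS n l G0 S" using supp unfolding DS_def dual_code_def by auto
    qed
  qed
  then have "card (DS n l G0 S) = card W" by (rule bij_betw_same_card)
  with W show ?thesis by simp
qed

lemma enc_iff:
  "encodable l k G0 G1 m S s \<longleftrightarrow>
     vadd S (restrict (\<lambda>i. \<Sum>j<k. G1 i j * m j) S) s \<in> Vs l G0 S"
proof -
  have "\<And>d. (restrict (\<lambda>i. restrict (\<lambda>i. \<Sum>j<k. G1 i j * m j) S i + s i) S = restrict (rv G0 l d) S)
     \<longleftrightarrow> (\<forall>i\<in>S. (\<Sum>j<l. G0 i j * d j) = (\<Sum>j<k. G1 i j * m j) + s i)"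
    unfolding restrict_eq_iff rv_def by (auto simp del: add_bit_eq_xor mult_bit_eq_and)
  then show ?thesis by (simp only: encodable_def Vs_def vadd_def image_iff)
qed

lemma bad_card:
  assumes S: "finite S"
  shows "card {s \<in> S \<rightarrow>\<^sub>E UNIV. \<not> encodable l k G0 G1 m S s} = 2 ^ card S - card (Vs l G0 S)"
proof -
  define c where "c = restrict (\<lambda>i. \<Sum>j<k. G1 i j * m j) S"
  define G where "G = {s \<in> S \<rightarrow>\<^sub>E UNIV. vadd S c s \<in> Vs l G0 S}"
  have "bij_betw (vadd S c) G (Vs l G0 S)"
  proof (rule bij_betw_byWitness[where f'="vadd S c"])
    show "\<forall>a\<in>G. vadd S c (vadd S c a) = a" unfolding G_def using vadd_inv by simp
    show "\<forall>a'\<in>Vs l G0 S. vadd S c (vadd S c a') = a'"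
      using vadd_inv[OF subsetD[OF Vs_sub]] by simp
    show "vadd S c ` G \<subseteq> Vs l G0 S" unfolding G_def by auto
    show "vadd S c ` Vs l G0 S \<subseteq> G"
    proof
      fix x assume "x \<in> vadd S c ` Vs l G0 S"
      then obtain a where a: "a \<in> Vs l G0 S" "x = vadd S c a" by auto
      have "vadd S c x = a" using a(2) vadd_inv[OF subsetD[OF Vs_sub a(1)]] by simp
      then show "x \<in> G" unfolding G_def using a vadd_in by auto
    qed
  qed
  then have cG: "card G = card (Vs l G0 S)" by (rule bij_betw_same_card)
  have "{s \<in> S \<rightarrow>\<^sub>E UNIV. \<not> encodable l k G0 G1 m S s} = (S \<rightarrow>\<^sub>E UNIV) - G"
    unfolding G_def enc_iff c_def by auto
  moreover have "card (S \<rightarrow>\<^sub>E (UNIV::bit set)) = 2 ^ card S" using S by (simp add: card_PiE card_bit)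
  moreover have "finite G" unfolding G_def using S by (simp add: finite_PiE)
  ultimately show ?thesis using cG by (simp add: card_Diff_subset G_def)
qed




definition zv :: "nat \<Rightarrow> nat \<Rightarrow> bit" where "zv n = restrict (\<lambda>_. 0) {..<n}"
definition supp :: "nat \<Rightarrow> (nat \<Rightarrow> bit) \<Rightarrow> nat set" where "supp n x = {i. i < n \<and> x i \<noteq> 0}"

lemma hweight_supp: "hweight n x = card (supp n x)" unfolding hweight_def supp_def by simp

lemma finite_supp[simp]: "finite (supp n x)" unfolding supp_def by simp

lemma bvecs_finite: "finite (bvecs n)" unfolding bvecs_def by (simp add: finite_PiE)

lemma dual_finite: "finite (dual_code n l G0)"
  by (rule finite_subset[OF _ bvecs_finite[of n]]) (auto simp: dual_code_def)

lemma zv_nz: assumes "x \<in> bvecs n" shows "x \<noteq> zv n \<longleftrightarrow> (\<exists>i<n. x i \<noteq> 0)"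
  using assms unfolding zv_def bvecs_def by (auto simp: fun_eq_iff PiE_def extensional_def)

lemma zv_DS: "zv n \<in> DS n l G0 S"
  unfolding DS_def dual_code_def zv_def bvecs_def
  by (auto intro!: sum.neutral simp del: add_bit_eq_xor mult_bit_eq_and)

lemma DS_finite: "finite (DS n l G0 S)"
  by (rule finite_subset[OF _ dual_finite[of n l G0]]) (auto simp: DS_def)

lemma DS_card_pos: "1 \<le> card (DS n l G0 S)"
proof -
  have "card (DS n l G0 S) \<noteq> 0" using zv_DS[of n l G0 S] DS_finite[of n l G0 S] by (auto simp: card_eq_0_iff)
  then show ?thesis by simp
qed

lemma dmin_le:
  assumes "x \<in> dual_code n l G0" "\<exists>i<n. x i \<noteq> 0"
  shows "dmin n l G0 \<le> hweight n x"
proof -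
  have "{hweight n x | x. x \<in> dual_code n l G0 \<and> (\<exists>i<n. x i \<noteq> 0)} \<subseteq> hweight n ` dual_code n l G0" by auto
  then have "finite {hweight n x | x. x \<in> dual_code n l G0 \<and> (\<exists>i<n. x i \<noteq> 0)}"
    by (rule finite_subset[OF _ finite_imageI[OF dual_finite]])
  then show ?thesis unfolding dmin_def by (rule Min_le) (use assms in auto)
qed

lemma dmin_pos:
  assumes "\<exists>x \<in> dual_code n l G0. \<exists>i<n. x i \<noteq> 0"
  shows "1 \<le> dmin n l G0"
proof -
  let ?M = "{hweight n x | x. x \<in> dual_code n l G0 \<and> (\<exists>i<n. x i \<noteq> 0)}"
  have "?M \<subseteq> hweight n ` dual_code n l G0" by auto
  then have "finite ?M" by (rule finite_subset[OF _ finite_imageI[OF dual_finite]])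
  moreover have "?M \<noteq> {}" using assms by auto
  ultimately have "dmin n l G0 \<in> ?M" unfolding dmin_def by (rule Min_in)
  then obtain x where x: "dmin n l G0 = hweight n x" "\<exists>i<n. x i \<noteq> 0" by auto
  then have "supp n x \<noteq> {}" unfolding supp_def by auto
  then show ?thesis using x(1) hweight_supp[of n x] by (simp add: Suc_leI card_gt_0_iff)
qed

lemma DS_hw:
  assumes "x \<in> DS n l G0 S" "finite S" shows "hweight n x \<le> card S"
proof -
  have "supp n x \<subseteq> S" using assms unfolding DS_def supp_def by auto
  then show ?thesis using card_mono[OF assms(2)] by (simp add: hweight_supp)
qed

lemma bit_sum_nz: "(a + b \<noteq> (0::bit)) \<longleftrightarrow> ((a \<noteq> 0) \<noteq> (b \<noteq> 0))"
  by (cases a; cases b) simp_all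

lemma DS_le2:
  assumes S: "S \<subseteq> {..<n}" "card S = u" and lt: "2 * u < 3 * dmin n l G0"
  shows "card (DS n l G0 S) \<le> 2"
proof -
  let ?D = "DS n l G0 S - {zv n}"
  have fS: "finite S" using finite_subset[OF S(1)] by simp
  have one: "\<forall>x\<in>?D. \<forall>y\<in>?D. x = y"
  proof (intro ballI, rule ccontr)
    fix x y assume x: "x \<in> ?D" and y: "y \<in> ?D" and xy: "x \<noteq> y"
    have xb: "x \<in> bvecs n" and yb: "y \<in> bvecs n" using x y unfolding DS_def dual_code_def by auto
    define z where "z = restrict (\<lambda>i. x i + y i) {..<n}"
    have zb: "z \<in> bvecs n" unfolding z_def bvecs_def by auto
    have zd: "z \<in> dual_code n l G0"
    proof -
      have "(\<Sum>i<n. G0 i j * z i) = 0" if "j < l" for j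
      proof -
        have "(\<Sum>i<n. G0 i j * z i) = (\<Sum>i<n. G0 i j * x i + G0 i j * y i)"
          by (rule sum.cong) (simp_all add: z_def distrib_left del: add_bit_eq_xor mult_bit_eq_and)
        also have "\<dots> = (\<Sum>i<n. G0 i j * x i) + (\<Sum>i<n. G0 i j * y i)" by (rule sum.distrib)
        also have "\<dots> = 0" using x y that unfolding DS_def dual_code_def by simp
        finally show ?thesis .
      qed
      then show ?thesis using zb unfolding dual_code_def by auto
    qed
    have "\<exists>i<n. x i \<noteq> y i"
    proof (rule ccontr)
      assume "\<not> ?thesis"
      then have "x = y" using xb yb unfolding bvecs_def by (intro PiE_ext[of x "{..<n}" "\<lambda>_. UNIV"]) auto
      then show False using xy by simp
    qed
    then obtain i where i: "i < n" "x i \<noteq> y i" by blast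
    have "z i = x i + y i" using i(1) unfolding z_def by simp
    also have "\<dots> \<noteq> 0" using i(2) by (cases "x i"; cases "y i") simp_all
    finally have znz: "\<exists>i<n. z i \<noteq> 0" using i(1) by blast
    have xnz: "\<exists>i<n. x i \<noteq> 0" using x xb zv_nz by auto
    have ynz: "\<exists>i<n. y i \<noteq> 0" using y yb zv_nz by auto
    have xd: "x \<in> dual_code n l G0" and yd: "y \<in> dual_code n l G0" using x y unfolding DS_def by auto
    let ?A = "supp n x" and ?B = "supp n y"
    have sz: "supp n z = (?A \<union> ?B) - (?A \<inter> ?B)"
    proof (rule set_eqI)
      fix i show "i \<in> supp n z \<longleftrightarrow> i \<in> (?A \<union> ?B) - (?A \<inter> ?B)"
      proof (cases "i < n")
        case True
        then show ?thesis by (cases "x i"; cases "y i") (simp_all add: supp_def z_def)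
      next
        case False
        then show ?thesis by (simp add: supp_def)
      qed
    qed
    have AS: "?A \<subseteq> S" and BS: "?B \<subseteq> S" using x y unfolding DS_def supp_def by auto
    have e1: "card ?A + card ?B = card (?A \<union> ?B) + card (?A \<inter> ?B)" by (rule card_Un_Int) simp_all
    have e2: "card (supp n z) = card (?A \<union> ?B) - card (?A \<inter> ?B)"
      unfolding sz by (rule card_Diff_subset) auto
    have e3: "card (?A \<inter> ?B) \<le> card (?A \<union> ?B)" by (rule card_mono) auto
    have e4: "card (?A \<union> ?B) \<le> card S" using AS BS fS by (intro card_mono) auto
    have "dmin n l G0 \<le> card ?A" using dmin_le[OF xd xnz] by (simp add: hweight_supp)
    moreover have "dmin n l G0 \<le> card ?B" using dmin_le[OF yd ynz] by (simp add: hweight_supp)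
    moreover have "dmin n l G0 \<le> card (supp n z)" using dmin_le[OF zd znz] by (simp add: hweight_supp)
    ultimately show False using e1 e2 e3 e4 lt S(2) by linarith
  qed
  have "finite ?D" using DS_finite by simp
  then have "card ?D \<le> 1" using one by (simp add: card_le_Suc0_iff_eq)
  moreover have "card ?D = card (DS n l G0 S) - 1" using zv_DS DS_finite by (simp add: card_Diff_singleton)
  ultimately show ?thesis using DS_card_pos[of n l G0 S] by linarith
qed

lemma DS_one:
  assumes S: "S \<subseteq> {..<n}" "card S = u" and lt: "u < dmin n l G0"
  shows "card (DS n l G0 S) = 1"
proof -
  have fS: "finite S" using finite_subset[OF S(1)] by simp
  have "DS n l G0 S = {zv n}"
  proof (rule ccontr)
    assume "DS n l G0 S \<noteq> {zv n}"
    then obtain x where x: "x \<in> DS n l G0 S" "x \<noteq> zv n" using zv_DS by blast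
    have xb: "x \<in> bvecs n" and xd: "x \<in> dual_code n l G0" using x unfolding DS_def dual_code_def by auto
    have "dmin n l G0 \<le> hweight n x" using dmin_le[OF xd] zv_nz[OF xb] x by auto
    moreover have "hweight n x \<le> u" using DS_hw[OF x(1) fS] S by simp
    ultimately show False using lt by simp
  qed
  then show ?thesis by simp
qed




lemma count_sup:
  fixes T :: "nat set" and n u :: nat
  assumes T: "T \<subseteq> {..<n}" and w: "card T \<le> u"
  shows "card {S. (S \<subseteq> {..<n} \<and> card S = u) \<and> T \<subseteq> S} = (n - card T) choose (u - card T)"
proof -
  have fT: "finite T" using finite_subset[OF T] by simp
  have "bij_betw (\<lambda>S. S - T) {S. (S \<subseteq> {..<n} \<and> card S = u) \<and> T \<subseteq> S} {R. R \<subseteq> {..<n} - T \<and> card R = u - card T}"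
  proof (rule bij_betw_byWitness[where f'="\<lambda>R. R \<union> T"])
    show "\<forall>a\<in>{S. (S \<subseteq> {..<n} \<and> card S = u) \<and> T \<subseteq> S}. a - T \<union> T = a" by auto
    show "\<forall>a'\<in>{R. R \<subseteq> {..<n} - T \<and> card R = u - card T}. a' \<union> T - T = a'" by auto
    show "(\<lambda>S. S - T) ` {S. (S \<subseteq> {..<n} \<and> card S = u) \<and> T \<subseteq> S} \<subseteq> {R. R \<subseteq> {..<n} - T \<and> card R = u - card T}"
    proof
      fix R assume "R \<in> (\<lambda>S. S - T) ` {S. (S \<subseteq> {..<n} \<and> card S = u) \<and> T \<subseteq> S}"
      then obtain S where S: "S \<subseteq> {..<n}" "card S = u" "T \<subseteq> S" "R = S - T" by auto
      have "card (S - T) = card S - card T" by (rule card_Diff_subset[OF fT S(3)])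
      then show "R \<in> {R. R \<subseteq> {..<n} - T \<and> card R = u - card T}" using S by auto
    qed
    show "(\<lambda>R. R \<union> T) ` {R. R \<subseteq> {..<n} - T \<and> card R = u - card T} \<subseteq> {S. (S \<subseteq> {..<n} \<and> card S = u) \<and> T \<subseteq> S}"
    proof
      fix S assume "S \<in> (\<lambda>R. R \<union> T) ` {R. R \<subseteq> {..<n} - T \<and> card R = u - card T}"
      then obtain R where R: "R \<subseteq> {..<n} - T" "card R = u - card T" "S = R \<union> T" by auto
      have fR: "finite R" using finite_subset[OF R(1)] by simp
      have "card (R \<union> T) = card R + card T" by (rule card_Un_disjoint[OF fR fT]) (use R(1) in auto)
      then show "S \<in> {S. (S \<subseteq> {..<n} \<and> card S = u) \<and> T \<subseteq> S}" using R w T by auto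
    qed
  qed
  then have "card {S. (S \<subseteq> {..<n} \<and> card S = u) \<and> T \<subseteq> S} = card {R. R \<subseteq> {..<n} - T \<and> card R = u - card T}"
    by (rule bij_betw_same_card)
  also have "\<dots> = card ({..<n} - T) choose (u - card T)" by (rule n_subsets) simp
  also have "card ({..<n} - T) = n - card T" using card_Diff_subset[OF fT T] by simp
  finally show ?thesis .
qed

lemma count_sup0:
  fixes T :: "nat set" and n u :: nat
  assumes "u < card T"
  shows "{S. (S \<subseteq> {..<n} \<and> card S = u) \<and> T \<subseteq> S} = {}"
proof (rule ccontr)
  assume "\<not> ?thesis"
  then obtain S where S: "S \<subseteq> {..<n}" "card S = u" "T \<subseteq> S" by auto
  have "finite S" using finite_subset[OF S(1)] by simp
  then have "card T \<le> card S" using card_mono S(3) by blast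
  then show False using S assms by simp
qed

lemma fail_formula:
  assumes un: "u \<le> n"
  shows "fail_prob n l k G0 G1 m u =
    (\<Sum>S\<in>{S. S \<subseteq> {..<n} \<and> card S = u}. 1 - 1 / real (card (DS n l G0 S))) / real (n choose u)"
proof -
  define Sets where "Sets = {S. S \<subseteq> {..<n} \<and> card S = u}"
  define Y where "Y S = (S \<rightarrow>\<^sub>E (UNIV::bit set))" for S :: "nat set"
  have fSets: "finite Sets" by (rule finite_subset[of _ "Pow {..<n}"]) (auto simp: Sets_def)
  have cSets: "card Sets = n choose u" unfolding Sets_def using n_subsets[of "{..<n}" u] by simp
  have fin_S: "finite S" if "S \<in> Sets" for S using that finite_subset[of S "{..<n}"] by (auto simp: Sets_def)
  have fY: "finite (Y S)" if "S \<in> Sets" for S using fin_S[OF that] by (simp add: Y_def finite_PiE)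
  have cY: "card (Y S) = 2 ^ u" if "S \<in> Sets" for S
  proof -
    have "card (Y S) = 2 ^ card S" using fin_S[OF that] by (simp add: Y_def card_PiE card_bit)
    then show ?thesis using that by (simp add: Sets_def)
  qed
  have Dsp: "defect_space n u = Sigma Sets Y" unfolding defect_space_def Sets_def Y_def by auto
  have finD: "finite (defect_space n u)" unfolding Dsp using fSets fY by (rule finite_SigmaI)
  have "0 < card Sets" using cSets un by simp
  then have "Sets \<noteq> {}" by auto
  then obtain S0 where S0: "S0 \<in> Sets" by auto
  then have "(S0, restrict (\<lambda>_. 0) S0) \<in> defect_space n u" unfolding Dsp Y_def by auto
  then have neD: "defect_space n u \<noteq> {}" by auto
  have P: "fail_prob n l k G0 G1 m u =
     card (defect_space n u \<inter> {(S, s). \<not> encodable l k G0 G1 m S s}) / card (defect_space n u)"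
    unfolding fail_prob_def by (rule measure_pmf_of_set[OF neD finD])
  have BS: "defect_space n u \<inter> {(S, s). \<not> encodable l k G0 G1 m S s} = Sigma Sets (\<lambda>S. {s \<in> Y S. \<not> encodable l k G0 G1 m S s})"
    unfolding Dsp by auto
  then have "card (defect_space n u \<inter> {(S, s). \<not> encodable l k G0 G1 m S s}) = (\<Sum>S\<in>Sets. card {s \<in> Y S. \<not> encodable l k G0 G1 m S s})"
  proof -
    have "\<forall>S\<in>Sets. finite {s \<in> Y S. \<not> encodable l k G0 G1 m S s}" using fY by auto
    then show ?thesis using card_SigmaI[OF fSets] BS by simp
  qed
  also have "\<dots> = (\<Sum>S\<in>Sets. 2 ^ u - card (Vs l G0 S))"
  proof (rule sum.cong)
    fix S assume S: "S \<in> Sets"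
    have "card {s \<in> Y S. \<not> encodable l k G0 G1 m S s} = 2 ^ card S - card (Vs l G0 S)"
      unfolding Y_def by (rule bad_card[OF fin_S[OF S]])
    then show "card {s \<in> Y S. \<not> encodable l k G0 G1 m S s} = 2 ^ u - card (Vs l G0 S)"
      using S by (simp add: Sets_def)
  qed simp
  finally have num: "card (defect_space n u \<inter> {(S, s). \<not> encodable l k G0 G1 m S s}) = (\<Sum>S\<in>Sets. 2 ^ u - card (Vs l G0 S))" .
  have den: "card (defect_space n u) = card Sets * 2 ^ u"
  proof -
    have "card (Sigma Sets Y) = (\<Sum>S\<in>Sets. card (Y S))" using fY by (intro card_SigmaI[OF fSets]) auto
    also have "\<dots> = (\<Sum>S\<in>Sets. 2 ^ u)" by (rule sum.cong) (simp_all add: cY)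
    finally show ?thesis unfolding Dsp by simp
  qed
  have per: "real (2 ^ u - card (Vs l G0 S)) = 2 ^ u * (1 - 1 / real (card (DS n l G0 S)))" if S: "S \<in> Sets" for S
  proof -
    have e: "card (Vs l G0 S) * card (DS n l G0 S) = 2 ^ u" using DS_card[of S n l G0] S by (simp add: Sets_def)
    have c1: "1 \<le> card (DS n l G0 S)" by (rule DS_card_pos)
    have "card (Vs l G0 S) \<le> card (Vs l G0 S) * card (DS n l G0 S)" using c1 by simp
    then have "card (Vs l G0 S) \<le> 2 ^ u" using e by simp
    then have "real (2 ^ u - card (Vs l G0 S)) = 2 ^ u - real (card (Vs l G0 S))" by (simp add: of_nat_diff)
    moreover have "real (card (Vs l G0 S)) * real (card (DS n l G0 S)) = 2 ^ u"
      using arg_cong[OF e, of real] by simp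
    ultimately have hb: "real (2 ^ u - card (Vs l G0 S)) = 2 ^ u - real (card (Vs l G0 S))"
      and had: "real (card (Vs l G0 S)) * real (card (DS n l G0 S)) = 2 ^ u" by blast+
    have dpos: "real (card (DS n l G0 S)) \<noteq> 0" using c1 by simp
    have "real (card (Vs l G0 S)) = 2 ^ u / real (card (DS n l G0 S))"
      using had dpos by (simp add: eq_divide_eq)
    then show ?thesis unfolding hb by (simp add: right_diff_distrib)
  qed
  have "fail_prob n l k G0 G1 m u = (\<Sum>S\<in>Sets. real (2 ^ u - card (Vs l G0 S))) / (real (card Sets) * 2 ^ u)"
    unfolding P num den by simp
  also have "\<dots> = (\<Sum>S\<in>Sets. 2 ^ u * (1 - 1 / real (card (DS n l G0 S)))) / (real (card Sets) * 2 ^ u)"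
    by (simp add: per)
  also have "\<dots> = (\<Sum>S\<in>Sets. 1 - 1 / real (card (DS n l G0 S))) / real (card Sets)"
    by (simp add: sum_distrib_left[symmetric])
  finally show ?thesis using cSets by (simp only: Sets_def)
qed




lemma sum_ident:
  assumes d1: "1 \<le> dmin n l G0"
  shows "(\<Sum>S\<in>{S. S \<subseteq> {..<n} \<and> card S = u}. card (DS n l G0 S) - 1)
       = (\<Sum>w=dmin n l G0..u. Bw n l G0 w * ((n - w) choose (u - w)))"
proof -
  define Sets where "Sets = {S. S \<subseteq> {..<n} \<and> card S = u}"
  define ND where "ND = {x \<in> dual_code n l G0. \<exists>i<n. x i \<noteq> 0}"
  define d0 where "d0 = dmin n l G0"
  define f where "f w = (n - w) choose (u - w)" for w
  have fSets: "finite Sets" by (rule finite_subset[of _ "Pow {..<n}"]) (auto simp: Sets_def)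
  have fND: "finite ND" by (rule finite_subset[OF _ dual_finite[of n l G0]]) (auto simp: ND_def)
  have e1: "card (DS n l G0 S) - 1 = card {x\<in>ND. supp n x \<subseteq> S}" for S
  proof -
    have "{x\<in>ND. supp n x \<subseteq> S} = DS n l G0 S - {zv n}"
    proof (rule set_eqI)
      fix x
      show "x \<in> {x\<in>ND. supp n x \<subseteq> S} \<longleftrightarrow> x \<in> DS n l G0 S - {zv n}"
      proof (cases "x \<in> dual_code n l G0")
        case True
        then have "x \<in> bvecs n" by (simp add: dual_code_def)
        then show ?thesis using True zv_nz[of x n] by (auto simp: ND_def DS_def supp_def)
      next
        case False then show ?thesis by (simp add: ND_def DS_def)
      qed
    qed
    then show ?thesis using zv_DS[of n l G0 S] DS_finite[of n l G0 S] by (simp add: card_Diff_singleton)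
  qed
  have "(\<Sum>S\<in>Sets. card (DS n l G0 S) - 1) = (\<Sum>S\<in>Sets. card {x\<in>ND. supp n x \<subseteq> S})" by (intro sum.cong refl e1)
  also have "\<dots> = (\<Sum>x\<in>ND. card {S\<in>Sets. supp n x \<subseteq> S})"
    using sum.swap_restrict[OF fSets fND, of "\<lambda>_ _. 1::nat" "\<lambda>S x. supp n x \<subseteq> S"] by simp
  also have "\<dots> = (\<Sum>x\<in>ND. if hweight n x \<le> u then f (hweight n x) else 0)"
  proof (rule sum.cong)
    fix x assume x: "x \<in> ND"
    have T: "supp n x \<subseteq> {..<n}" by (auto simp: supp_def)
    have eqs: "{S\<in>Sets. supp n x \<subseteq> S} = {S. (S \<subseteq> {..<n} \<and> card S = u) \<and> supp n x \<subseteq> S}"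
      by (simp add: Sets_def)
    show "card {S\<in>Sets. supp n x \<subseteq> S} = (if hweight n x \<le> u then f (hweight n x) else 0)"
    proof (cases "hweight n x \<le> u")
      case True then show ?thesis unfolding eqs f_def hweight_supp using count_sup[OF T, of u] by simp
    next
      case False then show ?thesis unfolding eqs hweight_supp using count_sup0[of u "supp n x" n] by simp
    qed
  qed simp
  also have "\<dots> = (\<Sum>x\<in>{x\<in>ND. hweight n x \<le> u}. f (hweight n x))"
    by (rule sum.inter_filter[OF fND, symmetric])
  also have "\<dots> = (\<Sum>w\<in>{d0..u}. \<Sum>x\<in>{x\<in>{x\<in>ND. hweight n x \<le> u}. hweight n x = w}. f (hweight n x))"
  proof (rule sum.group[symmetric])
    show "finite {x\<in>ND. hweight n x \<le> u}" using fND by simp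
    show "finite {d0..u}" by simp
    show "hweight n ` {x\<in>ND. hweight n x \<le> u} \<subseteq> {d0..u}"
    proof
      fix w assume "w \<in> hweight n ` {x\<in>ND. hweight n x \<le> u}"
      then obtain x where x: "x \<in> ND" "hweight n x \<le> u" "w = hweight n x" by auto
      have "d0 \<le> hweight n x" unfolding d0_def by (rule dmin_le) (use x(1) in \<open>auto simp: ND_def\<close>)
      then show "w \<in> {d0..u}" using x by simp
    qed
  qed
  also have "\<dots> = (\<Sum>w\<in>{d0..u}. Bw n l G0 w * f w)"
  proof (rule sum.cong)
    fix w assume w: "w \<in> {d0..u}"
    have eq: "{x\<in>{x\<in>ND. hweight n x \<le> u}. hweight n x = w} = {x \<in> dual_code n l G0. hweight n x = w}"
    proof (rule set_eqI)
      fix x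
      show "x \<in> {x\<in>{x\<in>ND. hweight n x \<le> u}. hweight n x = w} \<longleftrightarrow> x \<in> {x \<in> dual_code n l G0. hweight n x = w}"
      proof
        assume "x \<in> {x\<in>{x\<in>ND. hweight n x \<le> u}. hweight n x = w}"
        then show "x \<in> {x \<in> dual_code n l G0. hweight n x = w}" by (simp add: ND_def)
      next
        assume h: "x \<in> {x \<in> dual_code n l G0. hweight n x = w}"
        then have "card (supp n x) \<ge> 1" using w d1 by (simp add: hweight_supp d0_def)
        then have "supp n x \<noteq> {}" by auto
        then have "\<exists>i<n. x i \<noteq> 0" by (auto simp: supp_def)
        then show "x \<in> {x\<in>{x\<in>ND. hweight n x \<le> u}. hweight n x = w}" using h w by (simp add: ND_def)
      qed
    qed
    have "(\<Sum>x\<in>{x \<in> dual_code n l G0. hweight n x = w}. f (hweight n x))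
        = (\<Sum>x\<in>{x \<in> dual_code n l G0. hweight n x = w}. f w)" by (rule sum.cong) simp_all
    then show "(\<Sum>x\<in>{x\<in>{x\<in>ND. hweight n x \<le> u}. hweight n x = w}. f (hweight n x)) = Bw n l G0 w * f w"
      unfolding eq by (simp add: Bw_def)
  qed simp
  finally show ?thesis by (simp add: Sets_def d0_def f_def)
qed

theorem theorem2:
  fixes n l k u :: nat and G0 G1 :: "nat \<Rightarrow> nat \<Rightarrow> bit" and m :: "nat \<Rightarrow> bit"
  assumes "\<exists>x \<in> dual_code n l G0. \<exists>i<n. x i \<noteq> 0"
    and "1 \<le> u" and "u \<le> n"
  defines "d0 \<equiv> dmin n l G0"
  defines "t0 \<equiv> (d0 - 1) div 2"
  defines "S \<equiv> (\<Sum>w=d0..u. real (Bw n l G0 w) * real ((n - w) choose (u - w))) / real (n choose u)"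
  shows "(u < d0 \<longrightarrow> fail_prob n l k G0 G1 m u = 0)
       \<and> (d0 \<le> u \<and> u \<le> d0 + t0 \<longrightarrow> fail_prob n l k G0 G1 m u = 1/2 * S)
       \<and> (d0 + t0 < u \<longrightarrow> fail_prob n l k G0 G1 m u \<le> min S 1)"
proof -
  define Sets where "Sets = {S. S \<subseteq> {..<n} \<and> card S = u}"
  define c where "c S = card (DS n l G0 S)" for S
  have d1: "1 \<le> d0" unfolding d0_def by (rule dmin_pos[OF assms(1)])
  have fSets: "finite Sets" by (rule finite_subset[of _ "Pow {..<n}"]) (auto simp: Sets_def)
  have cSets: "card Sets = n choose u" unfolding Sets_def using n_subsets[of "{..<n}" u] by simp
  have Cpos: "0 < real (n choose u)" using assms(3) by simp
  have c1: "1 \<le> c S" for S unfolding c_def by (rule DS_card_pos)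
  have P: "fail_prob n l k G0 G1 m u = (\<Sum>S\<in>Sets. 1 - 1 / real (c S)) / real (n choose u)"
    unfolding Sets_def c_def by (rule fail_formula[OF assms(3)])
  have Sv: "S = real (\<Sum>S\<in>Sets. c S - 1) / real (n choose u)"
  proof -
    have "real (\<Sum>S\<in>Sets. c S - 1) = (\<Sum>w=d0..u. real (Bw n l G0 w) * real ((n - w) choose (u - w)))"
      unfolding Sets_def c_def sum_ident[OF d1[unfolded d0_def]] d0_def by (simp add: of_nat_sum)
    then show ?thesis unfolding S_def by simp
  qed
  have r1: "u < d0 \<longrightarrow> fail_prob n l k G0 G1 m u = 0"
  proof
    assume lt: "u < d0"
    have "(\<Sum>S\<in>Sets. 1 - 1 / real (c S)) = (\<Sum>S\<in>Sets. 0)"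
    proof (rule sum.cong)
      fix T assume "T \<in> Sets"
      then have "c T = 1" unfolding c_def Sets_def using DS_one[of T n u l G0] lt d0_def by simp
      then show "1 - 1 / real (c T) = 0" by simp
    qed simp
    then show "fail_prob n l k G0 G1 m u = 0" unfolding P by simp
  qed
  have r2: "d0 \<le> u \<and> u \<le> d0 + t0 \<longrightarrow> fail_prob n l k G0 G1 m u = 1/2 * S"
  proof
    assume h: "d0 \<le> u \<and> u \<le> d0 + t0"
    have lt: "2 * u < 3 * dmin n l G0" using h d1 unfolding t0_def d0_def by linarith
    have "(\<Sum>S\<in>Sets. 1 - 1 / real (c S)) = (\<Sum>S\<in>Sets. real (c S - 1) / 2)"
    proof (rule sum.cong)
      fix T assume "T \<in> Sets"
      then have "c T \<le> 2" unfolding c_def Sets_def using DS_le2[of T n u l G0] lt by simp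
      then have "c T = 1 \<or> c T = 2" using c1[of T] by linarith
      then show "1 - 1 / real (c T) = real (c T - 1) / 2" by auto
    qed simp
    also have "\<dots> = real (\<Sum>S\<in>Sets. c S - 1) / 2" by (simp add: sum_divide_distrib of_nat_sum)
    finally have X: "(\<Sum>S\<in>Sets. 1 - 1 / real (c S)) = real (\<Sum>S\<in>Sets. c S - 1) / 2" .
    show "fail_prob n l k G0 G1 m u = 1/2 * S" unfolding P Sv X by simp
  qed
  have r3: "d0 + t0 < u \<longrightarrow> fail_prob n l k G0 G1 m u \<le> min S 1"
  proof
    have t1: "1 - 1 / real (c T) \<le> real (c T - 1)" for T
    proof (cases "c T = 1")
      case True then show ?thesis by simp
    next
      case False then have "2 \<le> c T" using c1[of T] by linarith
      then have "1 \<le> real (c T - 1)" by linarith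
      moreover have "1 - 1 / real (c T) \<le> 1" by simp
      ultimately show ?thesis by linarith
    qed
    have t2: "1 - 1 / real (c T) \<le> 1" for T by simp
    have "(\<Sum>S\<in>Sets. 1 - 1 / real (c S)) \<le> (\<Sum>S\<in>Sets. real (c S - 1))" by (rule sum_mono) (rule t1)
    also have "\<dots> = real (\<Sum>S\<in>Sets. c S - 1)" by (simp add: of_nat_sum)
    finally have a: "fail_prob n l k G0 G1 m u \<le> S" unfolding P Sv using Cpos by (simp add: divide_right_mono)
    have "(\<Sum>S\<in>Sets. 1 - 1 / real (c S)) \<le> (\<Sum>S\<in>Sets. 1)" by (rule sum_mono) (rule t2)
    also have "\<dots> = real (n choose u)" using cSets by simp
    finally have b: "fail_prob n l k G0 G1 m u \<le> 1" unfolding P using Cpos by simp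
    show "fail_prob n l k G0 G1 m u \<le> min S 1" using a b by simp
  qed
  show ?thesis using r1 r2 r3 by blast
qed


end
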